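(* Let $L$ be a right Leibniz algebra. Then $L$ is prime if and only if $\mathrm{ran}_L(I)=\{0\}$ for every nonzero ideal $I$ of $L$.
   Context: A right Leibniz algebra satisfies $[x,[y,z]]=[[x,y],z]-[[x,z],y]$. Ideals: subspaces $I$ with $[I,L]\subseteq I$, $[L,I]\subseteq I$. $L$ is prime if $[I,J]\ne\{0\}$ for any two nonzero ideals $I,J$ (where $[I,J]$ is the span of $[x,y]$, $x\in I$, $y\in J$). $\mathrm{ran}_L(I)=\{x\in L:[y,x]=0\ \forall y\in I\}$. *)

theory Defs
  imports Complex_Main
begin

definition right_leibniz_algebra ::
  "('k::field \<Rightarrow> 'v::ab_group_add \<Rightarrow> 'v) \<Rightarrow> ('v \<Rightarrow> 'v \<Rightarrow> 'v) \<Rightarrow> bool" where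
  "right_leibniz_algebra scale br \<longleftrightarrow>
     vector_space scale \<and>
     (\<forall>x y z. br (x + y) z = br x z + br y z) \<and>
     (\<forall>x y z. br x (y + z) = br x y + br x z) \<and>
     (\<forall>a x y. br (scale a x) y = scale a (br x y)) \<and>
     (\<forall>a x y. br x (scale a y) = scale a (br x y)) \<and>
     (\<forall>x y z. br x (br y z) = br (br x y) z - br (br x z) y)"

definition lideal :: "('k::field \<Rightarrow> 'v::ab_group_add \<Rightarrow> 'v) \<Rightarrow> ('v \<Rightarrow> 'v \<Rightarrow> 'v) \<Rightarrow> 'v set \<Rightarrow> bool" where
  "lideal scale br I \<longleftrightarrow> module.subspace scale I \<and>
     (\<forall>x\<in>I. \<forall>y. br x y \<in> I) \<and> (\<forall>x\<in>I. \<forall>y. br y x \<in> I)"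

definition bracket_set :: "('k::field \<Rightarrow> 'v::ab_group_add \<Rightarrow> 'v) \<Rightarrow> ('v \<Rightarrow> 'v \<Rightarrow> 'v) \<Rightarrow> 'v set \<Rightarrow> 'v set \<Rightarrow> 'v set" where
  "bracket_set scale br I J = module.span scale {br x y | x y. x \<in> I \<and> y \<in> J}"

definition prime_leibniz :: "('k::field \<Rightarrow> 'v::ab_group_add \<Rightarrow> 'v) \<Rightarrow> ('v \<Rightarrow> 'v \<Rightarrow> 'v) \<Rightarrow> bool" where
  "prime_leibniz scale br \<longleftrightarrow>
     (\<forall>I J. lideal scale br I \<and> I \<noteq> {0} \<and> lideal scale br J \<and> J \<noteq> {0}
        \<longrightarrow> bracket_set scale br I J \<noteq> {0})"

definition ran_L :: "('v \<Rightarrow> 'v \<Rightarrow> 'v::zero) \<Rightarrow> 'v set \<Rightarrow> 'v set" where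
  "ran_L br I = {x. \<forall>y\<in>I. br y x = 0}"

end

theory Submission
  imports Defs
begin

theorem proposition2p9:
  fixes scale :: "'k::field \<Rightarrow> 'v::ab_group_add \<Rightarrow> 'v" and br :: "'v \<Rightarrow> 'v \<Rightarrow> 'v"
  assumes "right_leibniz_algebra scale br"
  shows "prime_leibniz scale br \<longleftrightarrow>
           (\<forall>I. lideal scale br I \<and> I \<noteq> {0} \<longrightarrow> ran_L br I = {0})"
proof -
  have vs: "vector_space scale" using assms unfolding right_leibniz_algebra_def by blast
  then have md: "module scale" by (simp add: module_iff_vector_space)
  have addl: "\<And>x y z. br (x + y) z = br x z + br y z"
   and addr: "\<And>x y z. br x (y + z) = br x y + br x z"
   and scr: "\<And>a x y. br x (scale a y) = scale a (br x y)"
   and jac: "\<And>x y z. br x (br y z) = br (br x y) z - br (br x z) y"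
    using assms unfolding right_leibniz_algebra_def by blast+
  have br0r: "\<And>x. br x 0 = 0" using addr[of _ 0 0] by simp
  have br0l: "\<And>x. br 0 x = 0" using addl[of 0 0] by simp
  have sub0: "module.subspace scale {0}"
    using md by (simp add: module.subspace_def module.scale_zero_right)
  show ?thesis
  proof
    assume pr: "prime_leibniz scale br"
    show "\<forall>I. lideal scale br I \<and> I \<noteq> {0} \<longrightarrow> ran_L br I = {0}"
    proof (intro allI impI)
      fix I assume I: "lideal scale br I \<and> I \<noteq> {0}"
      have Iin: "\<And>x y. x \<in> I \<Longrightarrow> br x y \<in> I" using I unfolding lideal_def by blast
      let ?R = "ran_L br I"
      have z: "0 \<in> ?R" by (simp add: ran_L_def br0r)
      have sR: "module.subspace scale ?R"
        using md br0r by (simp add: module.subspace_def ran_L_def addr scr module.scale_zero_right)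
      have lR: "lideal scale br ?R"
        unfolding lideal_def
      proof (intro conjI ballI allI)
        show "module.subspace scale ?R" by fact
      next
        fix x y assume "x \<in> ?R"
        then have x: "\<And>u. u \<in> I \<Longrightarrow> br u x = 0" by (simp add: ran_L_def)
        show "br x y \<in> ?R" unfolding ran_L_def
        proof (intro CollectI ballI)
          fix u assume u: "u \<in> I"
          have "br u (br x y) = br (br u x) y - br (br u y) x" by (rule jac)
          also have "\<dots> = 0" using x[OF u] x[OF Iin[OF u]] br0l by simp
          finally show "br u (br x y) = 0" .
        qed
        show "br y x \<in> ?R" unfolding ran_L_def
        proof (intro CollectI ballI)
          fix u assume u: "u \<in> I"
          have "br u (br y x) = br (br u y) x - br (br u x) y" by (rule jac)
          also have "\<dots> = 0" using x[OF u] x[OF Iin[OF u]] br0l by simp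
          finally show "br u (br y x) = 0" .
        qed
      qed
      show "?R = {0}"
      proof (rule ccontr)
        assume ne: "?R \<noteq> {0}"
        have "{br x y | x y. x \<in> I \<and> y \<in> ?R} \<subseteq> {0}" by (auto simp: ran_L_def)
        then have "bracket_set scale br I ?R \<subseteq> {0}"
          unfolding bracket_set_def using md sub0
          by (simp add: module.span_minimal)
        then have "bracket_set scale br I ?R = {0}"
          unfolding bracket_set_def using md module.span_zero by blast
        then show False using pr I lR ne unfolding prime_leibniz_def by blast
      qed
    qed
  next
    assume h: "\<forall>I. lideal scale br I \<and> I \<noteq> {0} \<longrightarrow> ran_L br I = {0}"
    show "prime_leibniz scale br"
      unfolding prime_leibniz_def
    proof (intro allI impI)
      fix I J assume IJ: "lideal scale br I \<and> I \<noteq> {0} \<and> lideal scale br J \<and> J \<noteq> {0}"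
      show "bracket_set scale br I J \<noteq> {0}"
      proof
        assume e: "bracket_set scale br I J = {0}"
        have "J \<subseteq> ran_L br I"
        proof
          fix y assume y: "y \<in> J"
          have "\<And>x. x \<in> I \<Longrightarrow> br x y \<in> bracket_set scale br I J"
            unfolding bracket_set_def by (rule module.span_base[OF md]) (use y in blast)
          then show "y \<in> ran_L br I" using e by (simp add: ran_L_def)
        qed
        moreover have "0 \<in> J" using IJ md unfolding lideal_def by (blast intro: module.subspace_0)
        ultimately have "J \<subseteq> {0}" using h IJ by simp
        then show False using \<open>0 \<in> J\<close> IJ by blast
      qed
    qed
  qed
qed

end
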